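(* Let $X_1,\dots,X_n$ ($n\ge 1$) and $Y$ be jointly distributed discrete random variables with $I(\mathbf X;Y)>0$, where $\mathbf X=(X_1,\dots,X_n)$, and let $\Pi$ be a partial information decomposition (as defined in the context) with $\Pi(\alpha)\ge 0$ for all $\alpha\in\mathcal A_n$. Then: (1) if $\bar r<1$ then $I_{\mathrm r}^{(0)}(\mathbf X;Y)>0$; (2) if $\bar r<0.5$ then $I_{\mathrm r}^{(0)}(\mathbf X;Y)/I(\mathbf X;Y)>0.5$; (3) if $\bar v<1$ then $I_{\mathrm v}^{(0)}(\mathbf X;Y)>0$; (4) if $\bar v<0.5$ then $I_{\mathrm v}^{(0)}(\mathbf X;Y)/I(\mathbf X;Y)>0.5$.
   Context: Notation: $[n]=\{1,\dots,n\}$. For $\mathbf a\subseteq[n]$, $X_{\mathbf a}=(X_i)_{i\in\mathbf a}$. Antichains: $\mathcal A_n$ is the set of all nonempty collections $\alpha$ of nonempty subsets of $[n]$ such that no element of $\alpha$ is a proper subset of another element of $\alpha$. Partial information decomposition (PID): any function $\Pi:\mathcal A_n\to\mathbb R$ satisfying, for every nonempty $\mathbf a\subseteq[n]$, $$I(X_{\mathbf a};Y)=\sum_{\alpha\in\mathcal A_n:\ \exists \mathbf b\in\alpha,\ \mathbf b\subseteq \mathbf a}\Pi(\alpha).$$ Degree of redundancy: $r(\alpha)=|\{i\in[n]: \{i\}\in\alpha\}|$. Degree of vulnerability: $v(\alpha)=|\{i\in[n]: i\in\mathbf b\text{ for all }\mathbf b\in\alpha\}|$. $I_{\mathrm r}^{(k)}(\mathbf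 X;Y)=\sum_{\alpha:\ r(\alpha)=k}\Pi(\alpha)$, $I_{\mathrm v}^{(k)}(\mathbf X;Y)=\sum_{\alpha:\ v(\alpha)=k}\Pi(\alpha)$. Average degrees: $\bar r=\sum_{k=0}^n k\,I_{\mathrm r}^{(k)}(\mathbf X;Y)/I(\mathbf X;Y)$ and $\bar v=\sum_{k=0}^n k\,I_{\mathrm v}^{(k)}(\mathbf X;Y)/I(\mathbf X;Y)$. *)

theory Defs
  imports "HOL-Probability.Probability"
begin

definition MI :: "'w measure \<Rightarrow> ('w \<Rightarrow> 'c) \<Rightarrow> ('w \<Rightarrow> 'b) \<Rightarrow> real" where
  "MI M X Y = prob_space.mutual_information M 2
      (count_space (X ` space M)) (count_space (Y ` space M)) X Y"

(* X_a = (X_i)_{i \<in> a}, represented as a function restricted to the index set a *)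
definition subvec :: "(nat \<Rightarrow> 'w \<Rightarrow> 'a) \<Rightarrow> nat set \<Rightarrow> 'w \<Rightarrow> (nat \<Rightarrow> 'a)" where
  "subvec X a = (\<lambda>\<omega>. restrict (\<lambda>i. X i \<omega>) a)"

definition antichains :: "nat \<Rightarrow> nat set set set" where
  "antichains n = {\<alpha>. \<alpha> \<noteq> {} \<and> (\<forall>b\<in>\<alpha>. b \<noteq> {} \<and> b \<subseteq> {1..n})
                     \<and> (\<forall>b\<in>\<alpha>. \<forall>c\<in>\<alpha>. \<not> b \<subset> c)}"

definition is_PID :: "'w measure \<Rightarrow> nat \<Rightarrow> (nat \<Rightarrow> 'w \<Rightarrow> 'a) \<Rightarrow> ('w \<Rightarrow> 'b)
                      \<Rightarrow> (nat set set \<Rightarrow> real) \<Rightarrow> bool" where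
  "is_PID M n X Y Pd \<longleftrightarrow>
     (\<forall>a. a \<noteq> {} \<and> a \<subseteq> {1..n} \<longrightarrow>
        MI M (subvec X a) Y = (\<Sum>\<alpha>\<in>{\<alpha>\<in>antichains n. \<exists>b\<in>\<alpha>. b \<subseteq> a}. Pd \<alpha>))"

definition red_deg :: "nat \<Rightarrow> nat set set \<Rightarrow> nat" where
  "red_deg n \<alpha> = card {i\<in>{1..n}. {i} \<in> \<alpha>}"

definition vul_deg :: "nat \<Rightarrow> nat set set \<Rightarrow> nat" where
  "vul_deg n \<alpha> = card {i\<in>{1..n}. \<forall>b\<in>\<alpha>. i \<in> b}"

definition I_r :: "nat \<Rightarrow> (nat set set \<Rightarrow> real) \<Rightarrow> nat \<Rightarrow> real" where
  "I_r n Pd k = (\<Sum>\<alpha>\<in>{\<alpha>\<in>antichains n. red_deg n \<alpha> = k}. Pd \<alpha>)"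

definition I_v :: "nat \<Rightarrow> (nat set set \<Rightarrow> real) \<Rightarrow> nat \<Rightarrow> real" where
  "I_v n Pd k = (\<Sum>\<alpha>\<in>{\<alpha>\<in>antichains n. vul_deg n \<alpha> = k}. Pd \<alpha>)"

(* average degrees; Itot stands for I(X;Y) *)
definition avg_red :: "nat \<Rightarrow> (nat set set \<Rightarrow> real) \<Rightarrow> real \<Rightarrow> real" where
  "avg_red n Pd Itot = (\<Sum>k=0..n. real k * I_r n Pd k) / Itot"

definition avg_vul :: "nat \<Rightarrow> (nat set set \<Rightarrow> real) \<Rightarrow> real \<Rightarrow> real" where
  "avg_vul n Pd Itot = (\<Sum>k=0..n. real k * I_v n Pd k) / Itot"

end

theory Submission
  imports Defs
begin

lemma deg_bound:
  fixes A :: "'x set" and d :: "'x \<Rightarrow> nat" and P :: "'x \<Rightarrow> real"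
  assumes fin: "finite A" and dn: "\<forall>a\<in>A. d a \<le> n" and nn: "\<forall>a\<in>A. P a \<ge> 0"
  shows "(\<Sum>k=0..n. real k * (\<Sum>a\<in>{a\<in>A. d a = k}. P a))
           \<ge> (\<Sum>a\<in>A. P a) - (\<Sum>a\<in>{a\<in>A. d a = 0}. P a)"
proof -
  have s1: "\<And>k. real k * (\<Sum>a\<in>{a\<in>A. d a = k}. P a) = (\<Sum>a\<in>{a\<in>A. d a = k}. real (d a) * P a)"
    by (simp add: sum_distrib_left)
  have s2: "(\<Sum>k=0..n. (\<Sum>a\<in>{a\<in>A. d a = k}. real (d a) * P a)) = (\<Sum>a\<in>A. real (d a) * P a)"
    by (rule sum.group) (use fin dn in auto)
  have e1: "(\<Sum>k=0..n. real k * (\<Sum>a\<in>{a\<in>A. d a = k}. P a)) = (\<Sum>a\<in>A. real (d a) * P a)"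
    unfolding s1 s2 ..
  have e2: "(\<Sum>a\<in>A. P a) = (\<Sum>a\<in>{a\<in>A. d a = 0}. P a) + (\<Sum>a\<in>{a\<in>A. d a \<noteq> 0}. P a)"
  proof -
    have u: "A = {a\<in>A. d a = 0} \<union> {a\<in>A. d a \<noteq> 0}" by auto
    have "(\<Sum>a\<in>{a\<in>A. d a = 0} \<union> {a\<in>A. d a \<noteq> 0}. P a)
          = (\<Sum>a\<in>{a\<in>A. d a = 0}. P a) + (\<Sum>a\<in>{a\<in>A. d a \<noteq> 0}. P a)"
      by (rule sum.union_disjoint) (use fin in auto)
    then show ?thesis using u by simp
  qed
  have "(\<Sum>a\<in>{a\<in>A. d a \<noteq> 0}. P a) \<le> (\<Sum>a\<in>{a\<in>A. d a \<noteq> 0}. real (d a) * P a)"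
  proof (rule sum_mono)
    fix a assume "a \<in> {a\<in>A. d a \<noteq> 0}"
    then have "real (d a) \<ge> 1" "P a \<ge> 0" using nn by auto
    then show "P a \<le> real (d a) * P a" by (simp add: mult_le_cancel_right1)
  qed
  also have "\<dots> \<le> (\<Sum>a\<in>A. real (d a) * P a)"
    by (rule sum_mono2) (use fin nn in auto)
  finally show ?thesis using e1 e2 by linarith
qed
lemma finite_antichains: "finite (antichains n)"
proof -
  have "antichains n \<subseteq> Pow (Pow {1..n})" unfolding antichains_def by auto
  then show ?thesis by (rule finite_subset) auto
qed

theorem corollary3:
  fixes M :: "'w measure" and n :: nat and X :: "nat \<Rightarrow> 'w \<Rightarrow> 'a" and Y :: "'w \<Rightarrow> 'b"
    and Pd :: "nat set set \<Rightarrow> real"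
  assumes "prob_space M"
    and "n \<ge> 1"
    and "\<forall>i\<in>{1..n}. X i \<in> measurable M (count_space UNIV) \<and> countable (X i ` space M)"
    and "Y \<in> measurable M (count_space UNIV)" and "countable (Y ` space M)"
    and "MI M (subvec X {1..n}) Y > 0"
    and "is_PID M n X Y Pd"
    and "\<forall>\<alpha>\<in>antichains n. Pd \<alpha> \<ge> 0"
  shows "(avg_red n Pd (MI M (subvec X {1..n}) Y) < 1 \<longrightarrow> I_r n Pd 0 > 0)
       \<and> (avg_red n Pd (MI M (subvec X {1..n}) Y) < 1/2 \<longrightarrow>
            I_r n Pd 0 / MI M (subvec X {1..n}) Y > 1/2)
       \<and> (avg_vul n Pd (MI M (subvec X {1..n}) Y) < 1 \<longrightarrow> I_v n Pd 0 > 0)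
       \<and> (avg_vul n Pd (MI M (subvec X {1..n}) Y) < 1/2 \<longrightarrow>
            I_v n Pd 0 / MI M (subvec X {1..n}) Y > 1/2)"
proof -
  define T where "T = MI M (subvec X {1..n}) Y"
  have Tpos: "T > 0" using assms(6) T_def by simp
  have "{\<alpha>\<in>antichains n. \<exists>b\<in>\<alpha>. b \<subseteq> {1..n}} = antichains n"
    unfolding antichains_def by auto
  then have Tsum: "T = (\<Sum>\<alpha>\<in>antichains n. Pd \<alpha>)"
  proof -
    have ne: "{1..n} \<noteq> {}" using assms(2) by simp
    have "MI M (subvec X {1..n}) Y = (\<Sum>\<alpha>\<in>{\<alpha>\<in>antichains n. \<exists>b\<in>\<alpha>. b \<subseteq> {1..n}}. Pd \<alpha>)"
      using assms(7) ne unfolding is_PID_def by blast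
    then show ?thesis using \<open>{\<alpha>\<in>antichains n. \<exists>b\<in>\<alpha>. b \<subseteq> {1..n}} = antichains n\<close>
      unfolding T_def by simp
  qed
  have rb: "\<forall>a\<in>antichains n. red_deg n a \<le> n"
  proof
    fix a
    have "card {i\<in>{1..n}. {i} \<in> a} \<le> card {1..n}" by (rule card_mono) auto
    then show "red_deg n a \<le> n" unfolding red_deg_def by simp
  qed
  have vb: "\<forall>a\<in>antichains n. vul_deg n a \<le> n"
  proof
    fix a
    have "card {i\<in>{1..n}. \<forall>b\<in>a. i \<in> b} \<le> card {1..n}" by (rule card_mono) auto
    then show "vul_deg n a \<le> n" unfolding vul_deg_def by simp
  qed
  have R: "(\<Sum>k=0..n. real k * I_r n Pd k) \<ge> T - I_r n Pd 0"
    unfolding I_r_def Tsum by (rule deg_bound[OF finite_antichains rb assms(8)])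
  have V: "(\<Sum>k=0..n. real k * I_v n Pd k) \<ge> T - I_v n Pd 0"
    unfolding I_v_def Tsum by (rule deg_bound[OF finite_antichains vb assms(8)])
  have key: "\<And>S J. S \<ge> T - J \<Longrightarrow> (S / T < 1 \<longrightarrow> J > 0) \<and> (S / T < 1/2 \<longrightarrow> J / T > 1/2)"
  proof -
    fix S J :: real assume h: "S \<ge> T - J"
    have a: "S / T < 1 \<longleftrightarrow> S < T" using Tpos by (simp add: divide_less_eq)
    have b: "S / T < 1/2 \<longleftrightarrow> S * 2 < T" using Tpos by (simp add: divide_less_eq)
    have c: "J / T > 1/2 \<longleftrightarrow> J * 2 > T" using Tpos by (simp add: less_divide_eq)
    show "(S / T < 1 \<longrightarrow> J > 0) \<and> (S / T < 1/2 \<longrightarrow> J / T > 1/2)"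
      unfolding a b c using h by linarith
  qed
  show ?thesis
    using key[OF R] key[OF V] unfolding avg_red_def avg_vul_def T_def by blast
qed

end
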